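(* Let $F$ be a non-archimedean local field with residue field $\mathbb F_q$. For $x\in F$ with $0<\|x\|\le1$ and $\|1-x\|=1$, $$E(x)=\frac{1+4q^{-1/2}+q^{-1}}{1-q^{-1}}\log q-\log\|x\|.$$ For all other $x\neq0,1$ the value $E(x)$ is determined from this by the identities $E(x)=E(1-x)$ and $E(x^{-1})=\|x\|^{1/2}E(x)$.
   Context: $\|x\|=q^{-v(x)}$ is the normalized absolute value, and $\|dx\|$ the Haar measure on $F$ normalized so that $\int_{1\le\|x\|<R}\|dx\|/\|x\|=\log R$ for $R\ge1$ in $\|F^\times\|$. For $x\in F\setminus\{0,1\}$, $E(x)=\int_F\frac{\|ds\|}{\sqrt{\|s(s-1)(s-x)\|}}$. *)

theory Defs
  imports "HOL-Analysis.Analysis" "HOL-Probability.Probability"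
begin

text \<open>A non-archimedean local field is modelled as a field type 'a together with a
normalized discrete valuation v (v is only meaningful on nonzero elements),
complete for the induced absolute value, whose residue field O/m has q elements.\<close>

definition discrete_valuation :: "('a::field \<Rightarrow> int) \<Rightarrow> bool" where
  "discrete_valuation v \<longleftrightarrow>
     (\<forall>x y. x \<noteq> 0 \<longrightarrow> y \<noteq> 0 \<longrightarrow> v (x * y) = v x + v y) \<and>
     (\<forall>x y. x \<noteq> 0 \<longrightarrow> y \<noteq> 0 \<longrightarrow> x + y \<noteq> 0 \<longrightarrow> v (x + y) \<ge> min (v x) (v y)) \<and>
     (\<forall>k. \<exists>x. x \<noteq> 0 \<and> v x = k)"

definition absv :: "('a::field \<Rightarrow> int) \<Rightarrow> nat \<Rightarrow> 'a \<Rightarrow> real" where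
  "absv v q x = (if x = 0 then 0 else real q powr (- real_of_int (v x)))"

definition val_ring :: "('a::field \<Rightarrow> int) \<Rightarrow> 'a set" where
  "val_ring v = {x. x = 0 \<or> v x \<ge> 0}"

definition max_ideal :: "('a::field \<Rightarrow> int) \<Rightarrow> 'a set" where
  "max_ideal v = {x. x = 0 \<or> v x \<ge> 1}"

definition residue_classes :: "('a::field \<Rightarrow> int) \<Rightarrow> 'a set set" where
  "residue_classes v = (\<lambda>x. {y \<in> val_ring v. y - x \<in> max_ideal v}) ` val_ring v"

definition complete_wrt :: "('a::field \<Rightarrow> int) \<Rightarrow> nat \<Rightarrow> bool" where
  "complete_wrt v q \<longleftrightarrow>
     (\<forall>X :: nat \<Rightarrow> 'a.
        (\<forall>e>0. \<exists>N. \<forall>m\<ge>N. \<forall>n\<ge>N. absv v q (X m - X n) < e) \<longrightarrow>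
        (\<exists>L. \<forall>e>0. \<exists>N. \<forall>n\<ge>N. absv v q (X n - L) < e))"

definition nonarch_local_field :: "('a::field \<Rightarrow> int) \<Rightarrow> nat \<Rightarrow> bool" where
  "nonarch_local_field v q \<longleftrightarrow>
     discrete_valuation v \<and> card (residue_classes v) = q \<and> q \<ge> 2 \<and> complete_wrt v q"

text \<open>Closed balls \<open>a + m^k\<close>; they generate the Borel sigma-algebra.\<close>
definition vball :: "('a::field \<Rightarrow> int) \<Rightarrow> 'a \<Rightarrow> int \<Rightarrow> 'a set" where
  "vball v a k = {y. y = a \<or> (y \<noteq> a \<and> v (y - a) \<ge> k)}"

text \<open>Haar measure on F, normalized so that the integral of \<open>\<parallel>dx\<parallel>/\<parallel>x\<parallel>\<close> over
\<open>1 \<le> \<parallel>x\<parallel> < R\<close> equals \<open>log R\<close> for every \<open>R \<ge> 1\<close> in \<open>\<parallel>F^\<times>\<parallel>\<close>, i.e. \<open>R = q^n\<close>.\<close>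
definition normalized_haar :: "('a::field \<Rightarrow> int) \<Rightarrow> nat \<Rightarrow> 'a measure \<Rightarrow> bool" where
  "normalized_haar v q M \<longleftrightarrow>
     space M = UNIV \<and>
     sets M = sigma_sets UNIV {vball v a k | a k. True} \<and>
     (\<forall>A\<in>sets M. \<forall>a. emeasure M ((\<lambda>y. a + y) ` A) = emeasure M A) \<and>
     (\<forall>n::nat. (\<integral>\<^sup>+ x \<in> {x. 1 \<le> absv v q x \<and> absv v q x < real q ^ n}.
                   ennreal (1 / absv v q x) \<partial>M) = ennreal (ln (real q ^ n)))"

definition Efun :: "('a::field \<Rightarrow> int) \<Rightarrow> nat \<Rightarrow> 'a measure \<Rightarrow> 'a \<Rightarrow> ennreal" where
  "Efun v q M x = (\<integral>\<^sup>+ s. ennreal (1 / sqrt (absv v q (s * (s - 1) * (s - x)))) \<partial>M)"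

end

theory Submission
  imports Defs
begin

locale vf = fixes v :: "'a::field \<Rightarrow> int" assumes dv: "discrete_valuation v"
begin

lemma vmult: "x \<noteq> 0 \<Longrightarrow> y \<noteq> 0 \<Longrightarrow> v (x * y) = v x + v y"
  using dv unfolding discrete_valuation_def by blast

lemma vadd: "x \<noteq> 0 \<Longrightarrow> y \<noteq> 0 \<Longrightarrow> x + y \<noteq> 0 \<Longrightarrow> v (x + y) \<ge> min (v x) (v y)"
  using dv unfolding discrete_valuation_def by blast

lemma vsurj: "\<exists>x. x \<noteq> 0 \<and> v x = k"
  using dv unfolding discrete_valuation_def by blast

lemma v1[simp]: "v 1 = 0"
  using vmult[of 1 1] by simp

lemma vm1[simp]: "v (-1) = 0"
  using vmult[of "-1" "-1"] by simp

lemma vneg[simp]: "v (- x) = v x"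
proof (cases "x = 0")
  case False
  then show ?thesis using vmult[of "-1" x] by simp
qed simp

lemma vinv: "x \<noteq> 0 \<Longrightarrow> v (inverse x) = - v x"
  using vmult[of x "inverse x"] by simp

lemma vdiv: "x \<noteq> 0 \<Longrightarrow> y \<noteq> 0 \<Longrightarrow> v (x / y) = v x - v y"
  using vmult[of x "inverse y"] vinv[of y] by (simp add: divide_inverse)

lemma vdiff_sym: "v (x - y) = v (y - x)"
  by (metis minus_diff_eq vneg)

lemma vsub: "x \<noteq> 0 \<Longrightarrow> y \<noteq> 0 \<Longrightarrow> x - y \<noteq> 0 \<Longrightarrow> v (x - y) \<ge> min (v x) (v y)"
  using vadd[of x "-y"] by simp

lemma vstrict: assumes "x \<noteq> 0" "y \<noteq> 0" "v x < v y"
  shows "x + y \<noteq> 0 \<and> v (x + y) = v x"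
proof -
  have ne: "x + y \<noteq> 0"
  proof
    assume "x + y = 0" then have "y = - x" by (metis add.commute eq_neg_iff_add_eq_0)
    then show False using assms by simp
  qed
  have 1: "v (x + y) \<ge> v x" using vadd[OF assms(1,2) ne] assms(3) by simp
  have "v x \<ge> min (v (x+y)) (v (-y))" using vadd[OF ne, of "-y"] assms by simp
  then have "v (x + y) \<le> v x" using assms(3) by simp
  with 1 ne show ?thesis by simp
qed

lemma vstrict_diff: assumes "x \<noteq> 0" "y \<noteq> 0" "v x < v y"
  shows "x - y \<noteq> 0 \<and> v (x - y) = v x"
  using vstrict[of x "-y"] assms by simp

lemma vstrict_diff2: assumes "x \<noteq> 0" "y \<noteq> 0" "v y < v x"
  shows "x - y \<noteq> 0 \<and> v (x - y) = v y"
  using vstrict[of "-y" x] assms by (simp add: add.commute)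

lemma mem_vball: "y \<in> vball v a k \<longleftrightarrow> y = a \<or> v (y - a) \<ge> k"
  unfolding vball_def by auto

lemma center_vball[simp]: "a \<in> vball v a k"
  by (simp add: mem_vball)

lemma vball_mono: "k \<le> k' \<Longrightarrow> vball v a k' \<subseteq> vball v a k"
  by (auto simp: mem_vball)

lemma vball_trans: assumes "b \<in> vball v a k" shows "vball v b k = vball v a k"
proof -
  have *: "c \<in> vball v a k" if h: "c \<in> vball v b k" "b \<in> vball v a k" for a b c
  proof -
    consider "c = b" | "b = a" | "c \<noteq> b" "b \<noteq> a" "v (c - b) \<ge> k" "v (b - a) \<ge> k"
      using h by (auto simp: mem_vball)
    then show ?thesis
    proof cases
      case 3
      show ?thesis
      proof (cases "c = a")
        case False
        have "c - a = (c - b) + (b - a)" by simp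
        then have "v (c - a) \<ge> min (v (c-b)) (v (b-a))"
          using vadd[of "c-b" "b-a"] 3 False by simp
        then show ?thesis using 3 by (simp add: mem_vball min_def split: if_splits)
      qed simp
    qed (use h in auto)
  qed
  have "a \<in> vball v b k" using assms by (auto simp: mem_vball vdiff_sym)
  then show ?thesis using * assms by blast
qed

lemma vball_disj: assumes "b \<notin> vball v a k" shows "vball v a k \<inter> vball v b k = {}"
  using vball_trans assms by (metis disjoint_iff center_vball)

lemma vball_translate: "vball v a k = (\<lambda>y. a + y) ` vball v 0 k"
proof (rule set_eqI)
  fix w
  have "w = a + (w - a)" by simp
  then show "w \<in> vball v a k \<longleftrightarrow> w \<in> (\<lambda>y. a + y) ` vball v 0 k"
    by (auto simp: mem_vball image_iff intro: bexI[where x="w - a"])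
qed

lemma vball_scale: assumes "p \<noteq> 0" shows "(\<lambda>y. p * y) ` vball v c k = vball v (p * c) (k + v p)"
proof -
  have 1: "p * y \<in> vball v (p * c) (k + v p)" if "y \<in> vball v c k" for y
  proof (cases "y = c")
    case False
    have "p * y - p * c = p * (y - c)" by (simp add: algebra_simps)
    then show ?thesis using that False assms vmult[of p "y - c"] by (auto simp: mem_vball)
  qed simp
  have 2: "w \<in> (\<lambda>y. p * y) ` vball v c k" if "w \<in> vball v (p * c) (k + v p)" for w
  proof -
    have "w / p \<in> vball v c k"
    proof (cases "w = p * c")
      case False
      have e: "w / p - c = (w - p * c) / p" using assms by (simp add: field_simps)
      have "w - p * c \<noteq> 0" using False by simp
      then show ?thesis using that False assms e vdiv[of "w - p*c" p] by (auto simp: mem_vball)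
    qed (use assms in simp)
    then show ?thesis using assms by (auto intro: image_eqI[where x="w/p"])
  qed
  show ?thesis using 1 2 by blast
qed

lemma vball_preimage: assumes "b \<noteq> 0"
  shows "{s. a + b * s \<in> vball v d k} = vball v ((d - a) / b) (k - v b)"
proof -
  have "a + b * s \<in> vball v d k \<longleftrightarrow> s \<in> vball v ((d - a) / b) (k - v b)" for s
  proof -
    have e: "a + b * s - d = b * (s - (d - a) / b)" using assms by (simp add: field_simps)
    show ?thesis
    proof (cases "s = (d - a) / b")
      case True then show ?thesis using assms by (simp add: mem_vball field_simps)
    next
      case False
      then have "a + b * s \<noteq> d" using assms by (auto simp: field_simps)
      moreover have "v (a + b * s - d) = v b + v (s - (d - a) / b)"
        using e vmult[of b "s - (d-a)/b"] False assms by simp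
      ultimately show ?thesis using False by (auto simp: mem_vball)
    qed
  qed
  then show ?thesis by auto
qed

end

locale lf = vf v for v :: "'a::field \<Rightarrow> int" +
  fixes q :: nat and M :: "'a measure"
  assumes card_res: "card (residue_classes v) = q" and q2: "q \<ge> 2"
    and haar: "normalized_haar v q M"
begin

lemma space_M[simp]: "space M = UNIV"
  using haar by (simp add: normalized_haar_def)

lemma sets_M: "sets M = sigma_sets UNIV {vball v a k |a k. True}"
  using haar by (simp add: normalized_haar_def)

lemma ball_sets[measurable, simp]: "vball v a k \<in> sets M"
  unfolding sets_M by (rule sigma_sets.Basic) blast

lemma transl: "A \<in> sets M \<Longrightarrow> emeasure M ((\<lambda>y. a + y) ` A) = emeasure M A"
  using haar by (simp add: normalized_haar_def)

lemma mball: "emeasure M (vball v a k) = emeasure M (vball v 0 k)"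
  by (subst vball_translate) (rule transl, simp)

lemma val_ring_eq: "val_ring v = vball v 0 0"
  by (auto simp: val_ring_def mem_vball)

lemma res_eq: "residue_classes v = (\<lambda>x. vball v x 1) ` vball v 0 0"
proof -
  have "{y \<in> val_ring v. y - x \<in> max_ideal v} = vball v x 1" if "x \<in> vball v 0 0" for x
  proof -
    have "vball v x 1 \<subseteq> vball v 0 0"
      using vball_mono[of 0 1 x] vball_trans[OF that] by auto
    then show ?thesis unfolding val_ring_eq by (auto simp: max_ideal_def mem_vball)
  qed
  then show ?thesis unfolding residue_classes_def val_ring_eq by (auto simp: image_def)
qed

lemma fin_res: "finite (residue_classes v)"
  using card_res q2 card.infinite by fastforce

lemma Union_res: "\<Union> (residue_classes v) = vball v 0 0"
proof -
  have "vball v x 1 \<subseteq> vball v 0 0" if "x \<in> vball v 0 0" for x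
    using vball_mono[of 0 1 x] vball_trans[OF that] by auto
  moreover have "x \<in> vball v x 1" for x by simp
  ultimately show ?thesis unfolding res_eq by blast
qed

lemma res_disj: "B \<in> residue_classes v \<Longrightarrow> B' \<in> residue_classes v \<Longrightarrow> B \<noteq> B' \<Longrightarrow> B \<inter> B' = {}"
proof -
  assume a: "B \<in> residue_classes v" "B' \<in> residue_classes v" "B \<noteq> B'"
  obtain x y where xy: "B = vball v x 1" "B' = vball v y 1" using a(1,2) unfolding res_eq by blast
  have "B = B'" if z: "z \<in> B" "z \<in> B'" for z
    using vball_trans[of z x 1] vball_trans[of z y 1] z xy by simp
  then show ?thesis using a(3) by blast
qed

lemma scale_step: "emeasure M (vball v 0 k) = of_nat q * emeasure M (vball v 0 (k + 1))"
proof -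
  obtain p where p: "p \<noteq> 0" "v p = k" using vsurj by blast
  define S where "S = residue_classes v"
  define F where "F B = (\<lambda>y. p * y) ` B" for B
  have FB: "\<exists>x. F B = vball v x (k + 1)" if hB: "B \<in> S" for B
  proof -
    obtain x where "B = vball v x 1" using hB unfolding S_def res_eq by auto
    then show ?thesis unfolding F_def using vball_scale[OF p(1), of x 1] p by (auto simp: add.commute)
  qed
  have inj: "inj (\<lambda>y. p * y)" using p by (auto intro: injI)
  have "disjoint_family_on F S"
    unfolding disjoint_family_on_def F_def S_def
  proof (intro ballI impI)
    fix B B' assume "B \<in> residue_classes v" "B' \<in> residue_classes v" "B \<noteq> B'"
    then have "B \<inter> B' = {}" using res_disj by blast
    then show "(\<lambda>y. p * y) ` B \<inter> (\<lambda>y. p * y) ` B' = {}"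
      using image_Int[OF inj, of B B'] by simp
  qed
  moreover have "F ` S \<subseteq> sets M"
  proof
    fix X assume "X \<in> F ` S"
    then obtain B where "B \<in> S" "X = F B" by blast
    then obtain x where "X = vball v x (k + 1)" using FB by blast
    then show "X \<in> sets M" by simp
  qed
  moreover have "finite S" using fin_res S_def by simp
  ultimately have "(\<Sum>B\<in>S. emeasure M (F B)) = emeasure M (\<Union>B\<in>S. F B)"
    by (intro sum_emeasure) auto
  moreover have "(\<Union>B\<in>S. F B) = vball v 0 k"
  proof -
    have "(\<Union>B\<in>S. F B) = (\<lambda>y. p * y) ` (\<Union>S)" unfolding F_def by auto
    also have "\<dots> = vball v 0 k" unfolding S_def Union_res using vball_scale[OF p(1), of 0 0] p by simp
    finally show ?thesis .
  qed
  moreover have "(\<Sum>B\<in>S. emeasure M (F B)) = (\<Sum>B\<in>S. emeasure M (vball v 0 (k + 1)))"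
  proof (rule sum.cong)
    fix B assume "B \<in> S"
    then obtain x where "F B = vball v x (k + 1)" using FB by blast
    then show "emeasure M (F B) = emeasure M (vball v 0 (k + 1))" using mball by simp
  qed simp
  ultimately show ?thesis using card_res S_def by simp
qed

lemma absv_nz: "x \<noteq> 0 \<Longrightarrow> absv v q x = real q powr (- real_of_int (v x))"
  by (simp add: absv_def)

lemma unit_set: "{x. 1 \<le> absv v q x \<and> absv v q x < real q ^ 1} = vball v 0 0 - vball v 0 1"
proof -
  have q1: "1 < real q" using q2 by simp
  have "1 \<le> absv v q x \<and> absv v q x < real q \<longleftrightarrow> x \<noteq> 0 \<and> v x = 0" for x
  proof (cases "x = 0")
    case True then show ?thesis by (simp add: absv_def)
  next
    case False
    have a: "1 \<le> real q powr (- real_of_int (v x)) \<longleftrightarrow> v x \<le> 0"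
      using powr_le_cancel_iff[OF q1, of 0 "- real_of_int (v x)"] q1 by simp
    have b: "real q powr (- real_of_int (v x)) < real q \<longleftrightarrow> -1 < real_of_int (v x)"
      using powr_less_cancel_iff[OF q1, of "- real_of_int (v x)" 1] by simp
    have c: "(v x \<le> 0 \<and> -1 < real_of_int (v x)) \<longleftrightarrow> v x = 0" by linarith
    have d: "absv v q x = real q powr (- real_of_int (v x))" using False by (rule absv_nz)
    show ?thesis unfolding d a b using False c by blast
  qed
  moreover have "x \<in> vball v 0 0 - vball v 0 1 \<longleftrightarrow> x \<noteq> 0 \<and> v x = 0" for x
    by (auto simp: mem_vball)
  ultimately show ?thesis by auto
qed

definition L where "L = ln (real q)"
definition mu0 where "mu0 = real q * L / (real q - 1)"

lemma L_pos: "L > 0" using q2 by (simp add: L_def)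

lemma mu0_pos: "mu0 > 0" using q2 L_pos by (simp add: mu0_def)

lemma unit_measure: "emeasure M (vball v 0 0 - vball v 0 1) = ennreal L"
proof -
  have n1: "(\<integral>\<^sup>+ x \<in> {x. 1 \<le> absv v q x \<and> absv v q x < real q ^ 1}.
                   ennreal (1 / absv v q x) \<partial>M) = ennreal (ln (real q ^ 1))"
    using haar unfolding normalized_haar_def by blast
  have "(\<integral>\<^sup>+ x \<in> vball v 0 0 - vball v 0 1. ennreal (1 / absv v q x) \<partial>M)
      = (\<integral>\<^sup>+ x. indicator (vball v 0 0 - vball v 0 1) x \<partial>M)"
  proof (rule nn_integral_cong)
    fix x show "ennreal (1 / absv v q x) * indicator (vball v 0 0 - vball v 0 1) x =
      indicator (vball v 0 0 - vball v 0 1) x"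
      using q2 by (cases "x \<in> vball v 0 0 - vball v 0 1") (auto simp: mem_vball absv_nz)
  qed
  also have "\<dots> = emeasure M (vball v 0 0 - vball v 0 1)" by simp
  finally show ?thesis using n1 unfolding unit_set by (simp add: L_def)
qed

lemma ball11_sub: "vball v 1 1 \<subseteq> vball v 0 0 - vball v 0 1"
proof
  fix y assume y: "y \<in> vball v 1 1"
  have "y \<noteq> 0 \<and> v y = 0"
  proof (cases "y = 1")
    case False
    then have "v (y - 1) \<ge> 1" using y by (simp add: mem_vball)
    then have "1 + (y - 1) \<noteq> 0 \<and> v (1 + (y - 1)) = v 1" using vstrict[of 1 "y - 1"] False by simp
    then show ?thesis by simp
  qed simp
  then show "y \<in> vball v 0 0 - vball v 0 1" by (simp add: mem_vball)
qed

lemma m1_fin: "emeasure M (vball v 0 1) = ennreal (L / (real q - 1))"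
proof -
  have "emeasure M (vball v 0 1) = emeasure M (vball v 1 1)" by (rule mball[symmetric])
  also have "\<dots> \<le> ennreal L" using emeasure_mono[OF ball11_sub, of M] unit_measure by (simp add: sets.Diff)
  finally have le: "emeasure M (vball v 0 1) \<le> ennreal L" .
  then obtain a where a: "emeasure M (vball v 0 1) = ennreal a" "a \<ge> 0"
    by (cases "emeasure M (vball v 0 1)" rule: ennreal_cases) (auto simp: top_unique)
  have aq: "a \<le> real q * a" using a(2) q2 by (simp add: mult_le_cancel_right1)
  have "emeasure M (vball v 0 0 - vball v 0 1) = emeasure M (vball v 0 0) - emeasure M (vball v 0 1)"
    by (rule emeasure_Diff) (use a vball_mono in auto)
  also have "emeasure M (vball v 0 0) = of_nat q * ennreal a" using scale_step[of 0] a by simp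
  finally have "ennreal L = ennreal (real q * a) - ennreal a" using unit_measure a
    by (simp add: ennreal_mult' ennreal_of_nat_eq_real_of_nat)
  also have "\<dots> = ennreal (real q * a - a)" using a by (simp add: ennreal_minus)
  finally have "L = real q * a - a" using L_pos a q2 aq by (subst (asm) ennreal_inj) auto
  then have "a = L / (real q - 1)" using q2 by (simp add: field_simps)
  then show ?thesis using a by simp
qed

lemma mball_val: "emeasure M (vball v c k) = ennreal (mu0 * real q powr (- real_of_int k))"
proof -
  have qpos: "real q > 0" "real q > 1" using q2 by auto
  have P0: "emeasure M (vball v 0 0) = ennreal (mu0 * real q powr (- real_of_int 0))"
    using scale_step[of 0] m1_fin qpos unfolding mu0_def
    by (simp add: ennreal_of_nat_eq_real_of_nat ennreal_mult'[symmetric] field_simps)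
  have "emeasure M (vball v 0 k) = ennreal (mu0 * real q powr (- real_of_int k))"
  proof (induction k rule: int_induct[where k=0])
    case base then show ?case using P0 by simp
  next
    case (step1 i)
    have "of_nat q * emeasure M (vball v 0 (i + 1)) = ennreal (mu0 * real q powr (- real_of_int i))"
      using step1 scale_step[of i] by simp
    then have "ennreal (real q) * emeasure M (vball v 0 (i + 1)) = ennreal (real q) * ennreal (mu0 * real q powr (- real_of_int (i + 1)))"
      using qpos by (simp add: ennreal_of_nat_eq_real_of_nat ennreal_mult'[symmetric] powr_diff powr_minus field_simps)
    then show ?case using qpos by (subst (asm) ennreal_mult_cancel_left) auto
  next
    case (step2 i)
    have "emeasure M (vball v 0 (i - 1)) = of_nat q * emeasure M (vball v 0 i)"
      using scale_step[of "i - 1"] by simp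
    also have "\<dots> = ennreal (real q * (mu0 * real q powr (- real_of_int i)))"
      using step2 qpos mu0_pos by (simp add: ennreal_of_nat_eq_real_of_nat ennreal_mult')
    also have "real q * (mu0 * real q powr (- real_of_int i)) = mu0 * real q powr (- real_of_int (i - 1))"
    proof -
      have "real q powr (1 - real_of_int i) = real q powr 1 * real q powr (- real_of_int i)"
        by (subst powr_add[symmetric]) simp
      then show ?thesis using qpos by simp
    qed
    finally show ?case .
  qed
  then show ?thesis by (simp only: mball[of c k])
qed


lemma shell_val: "emeasure M (vball v c k - vball v c (k + 1)) = ennreal (L * real q powr (- real_of_int k))"
proof -
  have "emeasure M (vball v c k - vball v c (k + 1)) = emeasure M (vball v c k) - emeasure M (vball v c (k+1))"
    by (rule emeasure_Diff) (auto simp: mball_val vball_mono)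
  also have "\<dots> = ennreal (mu0 * real q powr (- real_of_int k) - mu0 * real q powr (- real_of_int (k+1)))"
    using mu0_pos by (simp add: mball_val ennreal_minus)
  also have "mu0 * real q powr (- real_of_int k) - mu0 * real q powr (- real_of_int (k+1)) = L * real q powr (- real_of_int k)"
  proof -
    have e: "real q powr (- real_of_int (k+1)) = real q powr (- real_of_int k) / real q"
      using q2 by (simp add: powr_diff)
    have m: "mu0 * (1 - 1 / real q) = L" unfolding mu0_def using q2 by (simp add: field_simps)
    have "mu0 * real q powr (- real_of_int k) - mu0 * (real q powr (- real_of_int k) / real q)
       = (mu0 * (1 - 1 / real q)) * real q powr (- real_of_int k)" by (simp add: algebra_simps)
    then show ?thesis unfolding e m .
  qed
  finally show ?thesis .
qed

end

context lf
begin

lemma absv_mult: "absv v q (a * b) = absv v q a * absv v q b"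
proof (cases "a = 0 \<or> b = 0")
  case False
  then show ?thesis using q2 by (simp add: absv_nz vmult powr_add[symmetric] algebra_simps)
qed (auto simp: absv_def)

lemma absv_neg[simp]: "absv v q (- a) = absv v q a"
  by (simp add: absv_def)

lemma absv_pos: "a \<noteq> 0 \<Longrightarrow> absv v q a > 0"
  using q2 by (simp add: absv_nz)

lemma absv_ge0: "absv v q a \<ge> 0"
  by (simp add: absv_def)

lemma singleton_sets[simp]: "{c} \<in> sets M"
proof -
  have "{c} = (\<Inter>k::int. vball v c k)"
  proof (rule set_eqI)
    fix s show "s \<in> {c} \<longleftrightarrow> s \<in> (\<Inter>k::int. vball v c k)"
    proof (cases "s = c")
      case False
      then have "s \<notin> vball v c (v (s - c) + 1)" by (simp add: mem_vball)
      then show ?thesis using False by blast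
    qed simp
  qed
  also have "\<dots> \<in> sets M" by (intro sets.countable_INT) auto
  finally show ?thesis .
qed

lemma absv_meas[measurable]: "(\<lambda>s. absv v q (s - c)) \<in> borel_measurable M"
  unfolding borel_measurable_iff_le
proof
  fix t :: real
  have q1: "real q > 1" using q2 by simp
  show "{w \<in> space M. absv v q (w - c) \<le> t} \<in> sets M"
  proof (cases "t < 0")
    case True
    have "\<not> absv v q (w - c) \<le> t" for w using absv_ge0[of "w-c"] True by linarith
    then show ?thesis by simp
  next
    case False
    let ?I = "{k::int. real q powr (- real_of_int k) \<le> t}"
    have "{w \<in> space M. absv v q (w - c) \<le> t} = {c} \<union> (\<Union>k\<in>?I. vball v c k)"
    proof (rule set_eqI)
      fix w show "w \<in> {w \<in> space M. absv v q (w - c) \<le> t} \<longleftrightarrow> w \<in> {c} \<union> (\<Union>k\<in>?I. vball v c k)"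
      proof (cases "w = c")
        case True then show ?thesis using False by (simp add: absv_def)
      next
        case ne: False
        have "absv v q (w - c) \<le> t \<longleftrightarrow> (\<exists>k\<in>?I. v (w - c) \<ge> k)"
        proof
          assume "absv v q (w - c) \<le> t"
          then show "\<exists>k\<in>?I. v (w - c) \<ge> k" using ne by (intro bexI[of _ "v (w - c)"]) (auto simp: absv_nz)
        next
          assume "\<exists>k\<in>?I. v (w - c) \<ge> k"
          then obtain k where k: "real q powr (- real_of_int k) \<le> t" "v (w - c) \<ge> k" by auto
          have "real q powr (- real_of_int (v (w - c))) \<le> real q powr (- real_of_int k)"
            using k(2) q1 by (subst powr_le_cancel_iff) auto
          then show "absv v q (w - c) \<le> t" using ne k(1) by (simp add: absv_nz)
        qed
        then show ?thesis using ne by (auto simp: mem_vball)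
      qed
    qed
    also have "\<dots> \<in> sets M" by (intro sets.Un singleton_sets sets.countable_UN) auto
    finally show ?thesis .
  qed
qed

definition fx :: "'a \<Rightarrow> 'a \<Rightarrow> ennreal" where
  "fx x s = ennreal (1 / sqrt (absv v q (s * (s - 1) * (s - x))))"

lemma fx_alt: "fx x s = ennreal (1 / sqrt (absv v q (s - 0) * absv v q (s - 1) * absv v q (s - x)))"
  by (simp add: fx_def absv_mult)

lemma fx_meas[measurable]: "fx x \<in> borel_measurable M"
  unfolding fx_alt[abs_def] by measurable

lemma fx_val: assumes "s \<noteq> 0" "s \<noteq> 1" "s \<noteq> x"
  shows "fx x s = ennreal (real q powr ((real_of_int (v s) + real_of_int (v (s - 1)) + real_of_int (v (s - x))) / 2))"
proof -
  have q0: "real q > 0" using q2 by simp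
  have P: "absv v q (s - 0) * absv v q (s - 1) * absv v q (s - x)
      = real q powr (- (real_of_int (v s) + real_of_int (v (s - 1)) + real_of_int (v (s - x))))"
  proof -
    have "absv v q (s - 0) * absv v q (s - 1) * absv v q (s - x) = real q powr (- real_of_int (v s)) *
       real q powr (- real_of_int (v (s - 1))) * real q powr (- real_of_int (v (s - x)))"
      using assms by (simp add: absv_nz)
    also have "\<dots> = real q powr (- real_of_int (v s) + - real_of_int (v (s - 1)) + - real_of_int (v (s - x)))"
      by (simp only: powr_add)
    finally show ?thesis by simp
  qed
  have S: "1 / sqrt (real q powr (- y)) = real q powr (y / 2)" for y
  proof -
    have "sqrt (real q powr (- y)) = real q powr ((- y) / 2)"
      using powr_half_sqrt_powr[of "real q" "- y"] q0 by simp
    also have "\<dots> = real q powr (- (y / 2))" by simp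
    also have "\<dots> = inverse (real q powr (y / 2))" by (rule powr_minus)
    finally show ?thesis by (simp only: divide_inverse mult_1 inverse_inverse_eq)
  qed
  show ?thesis unfolding fx_alt P S ..
qed

end

context lf
begin

lemma shell_mem: "s \<in> vball v c k - vball v c (k + 1) \<longleftrightarrow> s \<noteq> c \<and> v (s - c) = k"
  by (auto simp: mem_vball)

lemma shell_int:
  fixes h :: "int \<Rightarrow> ennreal"
  shows "(\<integral>\<^sup>+s. (if s \<in> vball v c k0 \<and> s \<noteq> c then h (v (s - c)) else 0) \<partial>M)
       = (\<Sum>j. h (k0 + int j) * ennreal (L * real q powr (- real_of_int (k0 + int j))))"
proof -
  define S where "S j = vball v c (k0 + int j) - vball v c (k0 + int j + 1)" for j
  have Sm: "s \<in> S j \<longleftrightarrow> s \<noteq> c \<and> v (s - c) = k0 + int j" for s j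
    unfolding S_def by (rule shell_mem)
  have pt: "(if s \<in> vball v c k0 \<and> s \<noteq> c then h (v (s - c)) else 0) = (\<Sum>j. h (k0 + int j) * indicator (S j) s)" for s
  proof (cases "s \<in> vball v c k0 \<and> s \<noteq> c")
    case True
    define j0 where "j0 = nat (v (s - c) - k0)"
    have "k0 \<le> v (s - c)" using True by (auto simp: mem_vball)
    then have vj: "v (s - c) = k0 + int j0" by (simp add: j0_def)
    have "(\<Sum>j. h (k0 + int j) * indicator (S j) s) = (\<Sum>j\<in>{j0}. h (k0 + int j) * indicator (S j) s)"
      by (rule suminf_finite) (use True vj in \<open>auto simp: Sm indicator_def\<close>)
    then show ?thesis using True vj by (simp add: Sm indicator_def)
  next
    case False
    have "indicator (S j) s = (0::ennreal)" for j
      using False by (auto simp: Sm indicator_def mem_vball)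
    then show ?thesis by (subst if_not_P[OF False]) simp
  qed
  have "(\<integral>\<^sup>+s. (if s \<in> vball v c k0 \<and> s \<noteq> c then h (v (s - c)) else 0) \<partial>M)
      = (\<integral>\<^sup>+s. (\<Sum>j. h (k0 + int j) * indicator (S j) s) \<partial>M)"
    by (simp only: pt)
  also have "\<dots> = (\<Sum>j. \<integral>\<^sup>+s. h (k0 + int j) * indicator (S j) s \<partial>M)"
    by (rule nn_integral_suminf) (simp add: S_def)
  also have "\<dots> = (\<Sum>j. h (k0 + int j) * ennreal (L * real q powr (- real_of_int (k0 + int j))))"
  proof -
    have "emeasure M (S j) = ennreal (L * real q powr (- real_of_int (k0 + int j)))" for j
      unfolding S_def by (rule shell_val)
    moreover have "S j \<in> sets M" for j by (simp add: S_def sets.Diff)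
    ultimately show ?thesis by (simp add: nn_integral_cmult_indicator)
  qed
  finally show ?thesis .
qed

lemma shell_int_out:
  fixes h :: "int \<Rightarrow> ennreal"
  shows "(\<integral>\<^sup>+s. (if s \<notin> vball v c k0 then h (v (s - c)) else 0) \<partial>M)
       = (\<Sum>j. h (k0 - 1 - int j) * ennreal (L * real q powr (- real_of_int (k0 - 1 - int j))))"
proof -
  define S where "S j = vball v c (k0 - 1 - int j) - vball v c (k0 - 1 - int j + 1)" for j
  have Sm: "s \<in> S j \<longleftrightarrow> s \<noteq> c \<and> v (s - c) = k0 - 1 - int j" for s j
    unfolding S_def by (rule shell_mem)
  have pt: "(if s \<notin> vball v c k0 then h (v (s - c)) else 0) = (\<Sum>j. h (k0 - 1 - int j) * indicator (S j) s)" for s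
  proof (cases "s \<notin> vball v c k0")
    case True
    define j0 where "j0 = nat (k0 - 1 - v (s - c))"
    have vj: "v (s - c) = k0 - 1 - int j0" "s \<noteq> c" using True by (auto simp: j0_def mem_vball)
    have "(\<Sum>j. h (k0 - 1 - int j) * indicator (S j) s) = (\<Sum>j\<in>{j0}. h (k0 - 1 - int j) * indicator (S j) s)"
      by (rule suminf_finite) (use True vj in \<open>auto simp: Sm indicator_def\<close>)
    then show ?thesis using True vj by (simp add: Sm indicator_def)
  next
    case False
    have "indicator (S j) s = (0::ennreal)" for j
      using False by (auto simp: Sm indicator_def mem_vball)
    then show ?thesis using False by simp
  qed
  have "(\<integral>\<^sup>+s. (if s \<notin> vball v c k0 then h (v (s - c)) else 0) \<partial>M)
      = (\<integral>\<^sup>+s. (\<Sum>j. h (k0 - 1 - int j) * indicator (S j) s) \<partial>M)"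
    by (simp only: pt)
  also have "\<dots> = (\<Sum>j. \<integral>\<^sup>+s. h (k0 - 1 - int j) * indicator (S j) s \<partial>M)"
    by (rule nn_integral_suminf) (simp add: S_def)
  also have "\<dots> = (\<Sum>j. h (k0 - 1 - int j) * ennreal (L * real q powr (- real_of_int (k0 - 1 - int j))))"
  proof -
    have "emeasure M (S j) = ennreal (L * real q powr (- real_of_int (k0 - 1 - int j)))" for j
      unfolding S_def by (rule shell_val)
    moreover have "S j \<in> sets M" for j by (simp add: S_def sets.Diff)
    ultimately show ?thesis by (simp add: nn_integral_cmult_indicator)
  qed
  finally show ?thesis .
qed

lemma sig_ins: "sigma_sets UNIV (insert {} {vball v a k |a k. True}) = sigma_sets UNIV {vball v a k |a k. True}"
proof
  show "sigma_sets UNIV (insert {} {vball v a k |a k. True}) \<subseteq> sigma_sets UNIV {vball v a k |a k. True}"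
    by (rule sigma_sets_mono) (auto intro: sigma_sets.Empty sigma_sets.Basic)
  show "sigma_sets UNIV {vball v a k |a k. True} \<subseteq> sigma_sets UNIV (insert {} {vball v a k |a k. True})"
    by (rule sigma_sets_mono') auto
qed

lemma ball_int: "vball v a k \<inter> vball v b j \<in> insert {} {vball v a k |a k. True}"
proof -
  have *: "vball v a k \<inter> vball v b j \<in> insert {} {vball v a k |a k. True}" if "k \<le> j" for a b k j
  proof (cases "b \<in> vball v a k")
    case True
    then have "vball v b j \<subseteq> vball v a k" using vball_mono[OF that, of b] vball_trans[OF True] by simp
    then show ?thesis by blast
  next
    case False
    then have "vball v a k \<inter> vball v b k = {}" by (rule vball_disj)
    then have "vball v a k \<inter> vball v b j = {}" using vball_mono[OF that, of b] by blast
    then show ?thesis by simp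
  qed
  show ?thesis
  proof (cases "k \<le> j")
    case True then show ?thesis using * by blast
  next
    case False then show ?thesis using *[of j k b a] by (simp add: Int_commute)
  qed
qed

lemma cov:
  assumes b: "b \<noteq> 0" and g: "g \<in> borel_measurable M"
  shows "(\<integral>\<^sup>+s. g (a + b * s) \<partial>M) = ennreal (real q powr real_of_int (v b)) * integral\<^sup>N M g"
proof -
  let ?T = "\<lambda>s. a + b * s"
  let ?G = "{vball v a k |a k. True}"
  have pre: "?T -` vball v d k = vball v ((d - a) / b) (k - v b)" for d k
    using vball_preimage[OF b, of a d k] by (auto simp: vimage_def)
  have T: "?T \<in> measurable M M"
  proof (rule measurable_sigma_sets[OF sets_M])
    fix y assume "y \<in> ?G"
    then obtain d k where "y = vball v d k" by blast
    then show "?T -` y \<inter> space M \<in> sets M" using pre by simp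
  qed auto
  define c where "c = ennreal (real q powr real_of_int (v b))"
  have ed: "emeasure (distr M M ?T) (vball v d k) = ennreal (mu0 * real q powr (- real_of_int (k - v b)))" for d k
    by (simp add: emeasure_distr[OF T] pre mball_val)
  have D: "distr M M ?T = density M (\<lambda>_. c)"
  proof (rule measure_eqI_generator_eq[where E="insert {} ?G" and \<Omega>=UNIV and A="\<lambda>i. vball v 0 (- int i)"])
    show "Int_stable (insert {} ?G)"
      unfolding Int_stable_def
    proof (intro ballI)
      fix X Y assume X: "X \<in> insert {} ?G" and Y: "Y \<in> insert {} ?G"
      show "X \<inter> Y \<in> insert {} ?G"
      proof (cases "X = {} \<or> Y = {}")
        case True then show ?thesis by auto
      next
        case False
        then obtain a1 k1 a2 k2 where "X = vball v a1 k1" "Y = vball v a2 k2" using X Y by blast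
        then show ?thesis using ball_int by simp
      qed
    qed
    show "insert {} ?G \<subseteq> Pow UNIV" by simp
    show "sets (distr M M ?T) = sigma_sets UNIV (insert {} ?G)" unfolding sets_distr sets_M by (rule sig_ins[symmetric])
    show "sets (density M (\<lambda>_. c)) = sigma_sets UNIV (insert {} ?G)" unfolding sets_density sets_M by (rule sig_ins[symmetric])
    show "range (\<lambda>i. vball v 0 (- int i)) \<subseteq> insert {} ?G" by blast
    show "(\<Union>i. vball v 0 (- int i)) = UNIV"
    proof (rule set_eqI)
      fix s
      have "s \<in> vball v 0 (- int (nat (- v s)))" by (simp add: mem_vball)
      then show "s \<in> (\<Union>i. vball v 0 (- int i)) \<longleftrightarrow> s \<in> UNIV" by blast
    qed
    show "emeasure (distr M M ?T) (vball v 0 (- int i)) \<noteq> \<infinity>" for i by (simp add: ed)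
    fix X assume "X \<in> insert {} ?G"
    then consider "X = {}" | d k where "X = vball v d k" by blast
    then show "emeasure (distr M M ?T) X = emeasure (density M (\<lambda>_. c)) X"
    proof cases
      case 2
      have "emeasure (density M (\<lambda>_. c)) X = c * emeasure M X"
        by (simp add: emeasure_density 2 nn_integral_cmult_indicator)
      also have "\<dots> = ennreal (mu0 * real q powr (- real_of_int (k - v b)))"
        unfolding 2 c_def mball_val using mu0_pos
        by (simp add: ennreal_mult'[symmetric] powr_add[symmetric] algebra_simps)
      finally show ?thesis using ed 2 by simp
    qed simp
  qed
  have "(\<integral>\<^sup>+s. g (a + b * s) \<partial>M) = integral\<^sup>N (distr M M ?T) g"
    by (rule nn_integral_distr[OF T, symmetric]) (simp add: g)
  also have "\<dots> = (\<integral>\<^sup>+s. c * g s \<partial>M)" unfolding D by (rule nn_integral_density) (auto simp: g)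
  also have "\<dots> = c * integral\<^sup>N M g" by (rule nn_integral_cmult[OF g])
  finally show ?thesis unfolding c_def .
qed

end

lemma decomp_arith:
  fixes a b c n :: int and E :: "int \<Rightarrow> 'b::comm_monoid_add"
  assumes n: "n \<ge> 0"
    and t1: "a \<ge> min b 0" "b \<ge> min a 0" "0 \<ge> min a b"
    and t2: "a \<ge> min c n" "c \<ge> min a n" "n \<ge> min a c"
    and t3: "b \<ge> min c 0" "c \<ge> min b 0" "0 \<ge> min b c"
  shows "E (a + b + c) =
     (if \<not> a \<ge> 0 then E (3 * a) else 0)
   + (if b \<ge> 1 then E b else 0)
   + (if a \<ge> 1 \<and> a < n then E (2 * a) else 0)
   + (if a \<ge> n + 1 then E (n + a) else 0)
   + (if c \<ge> n + 1 then E (n + c) else 0)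
   + (if a \<ge> n \<and> \<not> a \<ge> n + 1 \<and> \<not> c \<ge> n + 1 \<and> \<not> b \<ge> 1 then E (2 * n) else 0)
   + (if a \<ge> 0 \<and> \<not> a \<ge> 1 \<and> \<not> b \<ge> 1 \<and> \<not> a \<ge> n then E 0 else 0)"
proof -
  consider "\<not> a \<ge> 0" | "b \<ge> 1" | "a \<ge> 1 \<and> a < n" | "a \<ge> n + 1" | "c \<ge> n + 1" | "a \<ge> n \<and> \<not> a \<ge> n + 1 \<and> \<not> c \<ge> n + 1 \<and> \<not> b \<ge> 1" | "a \<ge> 0 \<and> \<not> a \<ge> 1 \<and> \<not> b \<ge> 1 \<and> \<not> a \<ge> n" by linarith
  then show ?thesis
  proof cases
    case 1
    then have e: "b = a" "c = a" using assms by linarith+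
    have c: "\<not> a \<ge> 0" "\<not> (b \<ge> 1)" "\<not> (a \<ge> 1 \<and> a < n)" "\<not> (a \<ge> n + 1)" "\<not> (c \<ge> n + 1)" "\<not> (a \<ge> n \<and> \<not> a \<ge> n + 1 \<and> \<not> c \<ge> n + 1 \<and> \<not> b \<ge> 1)" "\<not> (a \<ge> 0 \<and> \<not> a \<ge> 1 \<and> \<not> b \<ge> 1 \<and> \<not> a \<ge> n)" using 1 e n by linarith+
    have s: "a + b + c = 3 * a" using e by simp
    show ?thesis unfolding s by (simp only: if_P[OF c(1)] if_not_P[OF c(2)] if_not_P[OF c(3)] if_not_P[OF c(4)] if_not_P[OF c(5)] if_not_P[OF c(6)] if_not_P[OF c(7)] add_0_right add_0_left)
  next
    case 2
    then have e: "a = 0" "c = 0" using assms by linarith+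
    have c: "\<not> (\<not> a \<ge> 0)" "b \<ge> 1" "\<not> (a \<ge> 1 \<and> a < n)" "\<not> (a \<ge> n + 1)" "\<not> (c \<ge> n + 1)" "\<not> (a \<ge> n \<and> \<not> a \<ge> n + 1 \<and> \<not> c \<ge> n + 1 \<and> \<not> b \<ge> 1)" "\<not> (a \<ge> 0 \<and> \<not> a \<ge> 1 \<and> \<not> b \<ge> 1 \<and> \<not> a \<ge> n)" using 2 e n by linarith+
    have s: "a + b + c = b" using e by simp
    show ?thesis unfolding s by (simp only: if_not_P[OF c(1)] if_P[OF c(2)] if_not_P[OF c(3)] if_not_P[OF c(4)] if_not_P[OF c(5)] if_not_P[OF c(6)] if_not_P[OF c(7)] add_0_right add_0_left)
  next
    case 3
    then have e: "b = 0" "c = a" using assms by linarith+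
    have c: "\<not> (\<not> a \<ge> 0)" "\<not> (b \<ge> 1)" "a \<ge> 1 \<and> a < n" "\<not> (a \<ge> n + 1)" "\<not> (c \<ge> n + 1)" "\<not> (a \<ge> n \<and> \<not> a \<ge> n + 1 \<and> \<not> c \<ge> n + 1 \<and> \<not> b \<ge> 1)" "\<not> (a \<ge> 0 \<and> \<not> a \<ge> 1 \<and> \<not> b \<ge> 1 \<and> \<not> a \<ge> n)" using 3 e n by linarith+
    have s: "a + b + c = 2 * a" using e by simp
    show ?thesis unfolding s by (simp only: if_not_P[OF c(1)] if_not_P[OF c(2)] if_P[OF c(3)] if_not_P[OF c(4)] if_not_P[OF c(5)] if_not_P[OF c(6)] if_not_P[OF c(7)] add_0_right add_0_left)
  next
    case 4
    then have e: "b = 0" "c = n" using assms by linarith+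
    have c: "\<not> (\<not> a \<ge> 0)" "\<not> (b \<ge> 1)" "\<not> (a \<ge> 1 \<and> a < n)" "a \<ge> n + 1" "\<not> (c \<ge> n + 1)" "\<not> (a \<ge> n \<and> \<not> a \<ge> n + 1 \<and> \<not> c \<ge> n + 1 \<and> \<not> b \<ge> 1)" "\<not> (a \<ge> 0 \<and> \<not> a \<ge> 1 \<and> \<not> b \<ge> 1 \<and> \<not> a \<ge> n)" using 4 e n by linarith+
    have s: "a + b + c = n + a" using e by simp
    show ?thesis unfolding s by (simp only: if_not_P[OF c(1)] if_not_P[OF c(2)] if_not_P[OF c(3)] if_P[OF c(4)] if_not_P[OF c(5)] if_not_P[OF c(6)] if_not_P[OF c(7)] add_0_right add_0_left)
  next
    case 5
    then have e: "b = 0" "a = n" using assms by linarith+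
    have c: "\<not> (\<not> a \<ge> 0)" "\<not> (b \<ge> 1)" "\<not> (a \<ge> 1 \<and> a < n)" "\<not> (a \<ge> n + 1)" "c \<ge> n + 1" "\<not> (a \<ge> n \<and> \<not> a \<ge> n + 1 \<and> \<not> c \<ge> n + 1 \<and> \<not> b \<ge> 1)" "\<not> (a \<ge> 0 \<and> \<not> a \<ge> 1 \<and> \<not> b \<ge> 1 \<and> \<not> a \<ge> n)" using 5 e n by linarith+
    have s: "a + b + c = n + c" using e by simp
    show ?thesis unfolding s by (simp only: if_not_P[OF c(1)] if_not_P[OF c(2)] if_not_P[OF c(3)] if_not_P[OF c(4)] if_P[OF c(5)] if_not_P[OF c(6)] if_not_P[OF c(7)] add_0_right add_0_left)
  next
    case 6
    then have e: "b = 0" "a = n" "c = n" using assms by linarith+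
    have c: "\<not> (\<not> a \<ge> 0)" "\<not> (b \<ge> 1)" "\<not> (a \<ge> 1 \<and> a < n)" "\<not> (a \<ge> n + 1)" "\<not> (c \<ge> n + 1)" "a \<ge> n \<and> \<not> a \<ge> n + 1 \<and> \<not> c \<ge> n + 1 \<and> \<not> b \<ge> 1" "\<not> (a \<ge> 0 \<and> \<not> a \<ge> 1 \<and> \<not> b \<ge> 1 \<and> \<not> a \<ge> n)" using 6 e n by linarith+
    have s: "a + b + c = 2 * n" using e by simp
    show ?thesis unfolding s by (simp only: if_not_P[OF c(1)] if_not_P[OF c(2)] if_not_P[OF c(3)] if_not_P[OF c(4)] if_not_P[OF c(5)] if_P[OF c(6)] if_not_P[OF c(7)] add_0_right add_0_left)
  next
    case 7
    then have e: "b = 0" "a = 0" "c = 0" using assms by linarith+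
    have c: "\<not> (\<not> a \<ge> 0)" "\<not> (b \<ge> 1)" "\<not> (a \<ge> 1 \<and> a < n)" "\<not> (a \<ge> n + 1)" "\<not> (c \<ge> n + 1)" "\<not> (a \<ge> n \<and> \<not> a \<ge> n + 1 \<and> \<not> c \<ge> n + 1 \<and> \<not> b \<ge> 1)" "a \<ge> 0 \<and> \<not> a \<ge> 1 \<and> \<not> b \<ge> 1 \<and> \<not> a \<ge> n" using 7 e n by linarith+
    have s: "a + b + c = 0" using e by simp
    show ?thesis unfolding s by (simp only: if_not_P[OF c(1)] if_not_P[OF c(2)] if_not_P[OF c(3)] if_not_P[OF c(4)] if_not_P[OF c(5)] if_not_P[OF c(6)] if_P[OF c(7)] add_0_right add_0_left)
  qed
qed


context lf
begin

lemma shell_meas[measurable]: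
  fixes h :: "int \<Rightarrow> ennreal"
  shows "(\<lambda>s. if s \<in> vball v c k0 \<and> s \<noteq> c then h (v (s - c)) else 0) \<in> borel_measurable M"
proof -
  define S where "S j = vball v c (k0 + int j) - vball v c (k0 + int j + 1)" for j
  have Sm: "s \<in> S j \<longleftrightarrow> s \<noteq> c \<and> v (s - c) = k0 + int j" for s j
    unfolding S_def by (rule shell_mem)
  have pt: "(if s \<in> vball v c k0 \<and> s \<noteq> c then h (v (s - c)) else 0) = (\<Sum>j. h (k0 + int j) * indicator (S j) s)" for s
  proof (cases "s \<in> vball v c k0 \<and> s \<noteq> c")
    case True
    define j0 where "j0 = nat (v (s - c) - k0)"
    have "k0 \<le> v (s - c)" using True by (auto simp: mem_vball)
    then have vj: "v (s - c) = k0 + int j0" by (simp add: j0_def)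
    have "(\<Sum>j. h (k0 + int j) * indicator (S j) s) = (\<Sum>j\<in>{j0}. h (k0 + int j) * indicator (S j) s)"
      by (rule suminf_finite) (use True vj in \<open>auto simp: Sm indicator_def\<close>)
    then show ?thesis using True vj by (simp add: Sm indicator_def)
  next
    case False
    have "indicator (S j) s = (0::ennreal)" for j
      using False by (auto simp: Sm indicator_def mem_vball)
    then show ?thesis by (subst if_not_P[OF False]) simp
  qed
  have "(\<lambda>s. \<Sum>j. h (k0 + int j) * indicator (S j) s) \<in> borel_measurable M"
    unfolding S_def by measurable
  then show ?thesis by (simp only: pt)
qed

lemma shell_out_meas[measurable]:
  fixes h :: "int \<Rightarrow> ennreal"
  shows "(\<lambda>s. if s \<notin> vball v c k0 then h (v (s - c)) else 0) \<in> borel_measurable M"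
proof -
  define S where "S j = vball v c (k0 - 1 - int j) - vball v c (k0 - 1 - int j + 1)" for j
  have Sm: "s \<in> S j \<longleftrightarrow> s \<noteq> c \<and> v (s - c) = k0 - 1 - int j" for s j
    unfolding S_def by (rule shell_mem)
  have pt: "(if s \<notin> vball v c k0 then h (v (s - c)) else 0) = (\<Sum>j. h (k0 - 1 - int j) * indicator (S j) s)" for s
  proof (cases "s \<notin> vball v c k0")
    case True
    define j0 where "j0 = nat (k0 - 1 - v (s - c))"
    have vj: "v (s - c) = k0 - 1 - int j0" "s \<noteq> c" using True by (auto simp: j0_def mem_vball)
    have "(\<Sum>j. h (k0 - 1 - int j) * indicator (S j) s) = (\<Sum>j\<in>{j0}. h (k0 - 1 - int j) * indicator (S j) s)"
      by (rule suminf_finite) (use True vj in \<open>auto simp: Sm indicator_def\<close>)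
    then show ?thesis using True vj by (simp add: Sm indicator_def)
  next
    case False
    have "indicator (S j) s = (0::ennreal)" for j
      using False by (auto simp: Sm indicator_def mem_vball)
    then show ?thesis using False by simp
  qed
  have "(\<lambda>s. \<Sum>j. h (k0 - 1 - int j) * indicator (S j) s) \<in> borel_measurable M"
    unfolding S_def by measurable
  then show ?thesis by (simp only: pt)
qed

lemma tri: assumes "p \<noteq> 0" "r \<noteq> 0" "p + r \<noteq> 0"
  shows "v (p + r) \<ge> min (v p) (v r)" "v p \<ge> min (v (p + r)) (v r)" "v r \<ge> min (v (p + r)) (v p)"
proof -
  show "v (p + r) \<ge> min (v p) (v r)" using vadd[OF assms] .
  have "v ((p + r) + (- r)) \<ge> min (v (p + r)) (v (- r))" using vadd[of "p + r" "- r"] assms by simp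
  then show "v p \<ge> min (v (p + r)) (v r)" by simp
  have "v ((p + r) + (- p)) \<ge> min (v (p + r)) (v (- p))" using vadd[of "p + r" "- p"] assms by simp
  then show "v r \<ge> min (v (p + r)) (v p)" by (simp add: add.commute)
qed

definition Ef :: "int \<Rightarrow> ennreal" where "Ef k = ennreal (real q powr (real_of_int k / 2))"

lemma fx_decomp:
  assumes x: "x \<noteq> 0" "v x = n" "n \<ge> 0" "1 - x \<noteq> 0" "v (1 - x) = 0"
  shows "fx x s =
      (if s \<notin> vball v 0 0 then Ef (3 * v (s - 0)) else 0)
    + (if s \<in> vball v 1 1 \<and> s \<noteq> 1 then Ef (v (s - 1)) else 0)
    + (if s \<in> vball v 0 1 \<and> s \<noteq> 0 then (if v (s - 0) < n then Ef (2 * v (s - 0)) else 0) else 0)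
    + (if s \<in> vball v 0 (n + 1) \<and> s \<noteq> 0 then Ef (n + v (s - 0)) else 0)
    + (if s \<in> vball v x (n + 1) \<and> s \<noteq> x then Ef (n + v (s - x)) else 0)
    + Ef (2 * n) * indicator (vball v 0 n - vball v 0 (n + 1) - vball v x (n + 1) - vball v 1 1) s
    + Ef 0 * indicator (vball v 0 0 - vball v 0 1 - vball v 1 1 - vball v 0 n) s"
proof (cases "s = 0 \<or> s = 1 \<or> s = x")
  case True
  have vx1: "v (x - 1) = 0" using x(5) vdiff_sym by simp
  have f0: "fx x s = 0" using True by (auto simp: fx_def absv_def)
  have "x \<noteq> 1" using x(4) by simp
  then show ?thesis using True x vx1 by (auto simp: f0 mem_vball indicator_def vdiff_sym[of 0 x] vdiff_sym[of 1 x])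
next
  case False
  then have s: "s \<noteq> 0" "s \<noteq> 1" "s \<noteq> x" by auto
  define a where "a = v s"
  define b where "b = v (s - 1)"
  define c where "c = v (s - x)"
  have t1: "a \<ge> min b 0" "b \<ge> min a 0" "0 \<ge> min a b"
    using tri[of "s - 1" 1] s unfolding a_def b_def by auto
  have t2: "a \<ge> min c n" "c \<ge> min a n" "n \<ge> min a c"
    using tri[of "s - x" x] s x unfolding a_def c_def by auto
  have t3: "c \<ge> min b 0" "b \<ge> min c 0" "0 \<ge> min c b"
    using tri[of "s - 1" "1 - x"] s x unfolding b_def c_def by auto
  have D: "Ef (a + b + c) =
     (if \<not> a \<ge> 0 then Ef (3 * a) else 0) + (if b \<ge> 1 then Ef b else 0)
   + (if a \<ge> 1 \<and> a < n then Ef (2 * a) else 0) + (if a \<ge> n + 1 then Ef (n + a) else 0)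
   + (if c \<ge> n + 1 then Ef (n + c) else 0)
   + (if a \<ge> n \<and> \<not> a \<ge> n + 1 \<and> \<not> c \<ge> n + 1 \<and> \<not> b \<ge> 1 then Ef (2 * n) else 0)
   + (if a \<ge> 0 \<and> \<not> a \<ge> 1 \<and> \<not> b \<ge> 1 \<and> \<not> a \<ge> n then Ef 0 else 0)"
    by (rule decomp_arith) (use x t1 t2 t3 in linarith)+
  have "fx x s = Ef (a + b + c)" unfolding Ef_def a_def b_def c_def using fx_val[OF s] by simp
  then show ?thesis unfolding D using s by (simp add: mem_vball indicator_def a_def b_def c_def)
qed

end

context lf
begin

definition rr where "rr = real q powr (-1/2)"

lemma rr_pos: "rr > 0" using q2 by (simp add: rr_def)
lemma rr_lt1: "rr < 1"
  using q2 unfolding rr_def by (subst powr_less_one) auto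
lemma rr_sq: "rr * rr = 1 / real q"
proof -
  have "rr * rr = real q powr (-1/2 + -1/2)" unfolding rr_def by (simp only: powr_add)
  also have "\<dots> = 1 / real q" using q2 by (simp add: powr_minus_divide)
  finally show ?thesis .
qed

lemma rr_pow: "rr ^ Suc j = real q powr (- (1 + real j) / 2)"
proof -
  have "rr ^ Suc j = rr powr real (Suc j)" by (rule powr_realpow[OF rr_pos, symmetric])
  also have "\<dots> = real q powr (-1/2 * real (Suc j))" unfolding rr_def by (simp add: powr_powr)
  also have "-1/2 * real (Suc j) = - (1 + real j) / 2" by (simp add: field_simps)
  finally show ?thesis .
qed

lemma term_eq: assumes "real_of_int k / 2 + b = - (1 + real j) / 2"
  shows "Ef k * ennreal (L * real q powr b) = ennreal (L * rr ^ Suc j)"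
proof -
  have "Ef k * ennreal (L * real q powr b) = ennreal (real q powr (real_of_int k / 2) * (L * real q powr b))"
    unfolding Ef_def using L_pos by (simp add: ennreal_mult)
  also have "real q powr (real_of_int k / 2) * (L * real q powr b) = L * real q powr (real_of_int k / 2 + b)"
    by (simp add: powr_add)
  finally show ?thesis unfolding assms rr_pow .
qed

lemma geo: "(\<Sum>j. ennreal (L * rr ^ Suc j)) = ennreal (L * (rr / (1 - rr)))"
proof -
  have sg: "summable (\<lambda>j. rr ^ j)" using rr_pos rr_lt1 by (intro summable_geometric) simp
  have s: "summable (\<lambda>j. L * rr ^ Suc j)"
    using summable_mult[OF sg, of "L * rr"] by (simp add: algebra_simps)
  have "(\<Sum>j. L * rr ^ Suc j) = L * rr * (\<Sum>j. rr ^ j)"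
    using suminf_mult[OF sg, of "L * rr"] by (simp add: algebra_simps)
  also have "\<dots> = L * (rr / (1 - rr))" using rr_pos rr_lt1 by (simp add: suminf_geometric)
  finally have e: "(\<Sum>j. L * rr ^ Suc j) = L * (rr / (1 - rr))" .
  show ?thesis
    by (subst suminf_ennreal2) (use s e L_pos rr_pos in auto)
qed

lemma I1: "(\<integral>\<^sup>+s. (if s \<notin> vball v 0 0 then Ef (3 * v (s - 0)) else 0) \<partial>M) = ennreal (L * (rr / (1 - rr)))"
proof -
  have "(\<integral>\<^sup>+s. (if s \<notin> vball v 0 0 then Ef (3 * v (s - 0)) else 0) \<partial>M)
     = (\<Sum>j. Ef (3 * (0 - 1 - int j)) * ennreal (L * real q powr (- real_of_int (0 - 1 - int j))))"
    by (rule shell_int_out[of 0 0 "\<lambda>k. Ef (3 * k)"])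
  also have "\<dots> = (\<Sum>j. ennreal (L * rr ^ Suc j))"
    by (rule suminf_cong, rule term_eq) (simp add: field_simps)
  finally show ?thesis using geo by simp
qed

lemma I2: "(\<integral>\<^sup>+s. (if s \<in> vball v 1 1 \<and> s \<noteq> 1 then Ef (v (s - 1)) else 0) \<partial>M) = ennreal (L * (rr / (1 - rr)))"
proof -
  have "(\<integral>\<^sup>+s. (if s \<in> vball v 1 1 \<and> s \<noteq> 1 then Ef (v (s - 1)) else 0) \<partial>M)
     = (\<Sum>j. Ef (1 + int j) * ennreal (L * real q powr (- real_of_int (1 + int j))))"
    by (rule shell_int[of 1 1 "\<lambda>k. Ef k"])
  also have "\<dots> = (\<Sum>j. ennreal (L * rr ^ Suc j))"
    by (rule suminf_cong, rule term_eq) (simp add: field_simps)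
  finally show ?thesis using geo by simp
qed

lemma I45: assumes "n \<ge> 0"
  shows "(\<integral>\<^sup>+s. (if s \<in> vball v c (n + 1) \<and> s \<noteq> c then Ef (n + v (s - c)) else 0) \<partial>M) = ennreal (L * (rr / (1 - rr)))"
proof -
  have "(\<integral>\<^sup>+s. (if s \<in> vball v c (n + 1) \<and> s \<noteq> c then Ef (n + v (s - c)) else 0) \<partial>M)
     = (\<Sum>j. Ef (n + (n + 1 + int j)) * ennreal (L * real q powr (- real_of_int (n + 1 + int j))))"
    by (rule shell_int[of c "n + 1" "\<lambda>k. Ef (n + k)"])
  also have "\<dots> = (\<Sum>j. ennreal (L * rr ^ Suc j))"
    by (rule suminf_cong, rule term_eq) (simp add: field_simps)
  finally show ?thesis using geo by simp
qed

lemma I3: "(\<integral>\<^sup>+s. (if s \<in> vball v 0 1 \<and> s \<noteq> 0 then (if v (s - 0) < n then Ef (2 * v (s - 0)) else 0) else 0) \<partial>M)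
   = ennreal (L * real (nat (n - 1)))"
proof -
  have "(\<integral>\<^sup>+s. (if s \<in> vball v 0 1 \<and> s \<noteq> 0 then (if v (s - 0) < n then Ef (2 * v (s - 0)) else 0) else 0) \<partial>M)
     = (\<Sum>j. (if 1 + int j < n then Ef (2 * (1 + int j)) else 0) * ennreal (L * real q powr (- real_of_int (1 + int j))))"
    by (rule shell_int[of 0 1 "\<lambda>k. if k < n then Ef (2 * k) else 0"])
  also have "\<dots> = (\<Sum>j. if j < nat (n - 1) then ennreal L else 0)"
  proof (rule suminf_cong)
    fix j
    have "Ef (2 * (1 + int j)) * ennreal (L * real q powr (- real_of_int (1 + int j))) = ennreal L"
    proof -
      have "Ef (2 * (1 + int j)) * ennreal (L * real q powr (- real_of_int (1 + int j)))
          = ennreal (real q powr (real_of_int (2 * (1 + int j)) / 2) * (L * real q powr (- real_of_int (1 + int j))))"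
        unfolding Ef_def using L_pos by (simp add: ennreal_mult)
      also have "real q powr (real_of_int (2 * (1 + int j)) / 2) * (L * real q powr (- real_of_int (1 + int j)))
          = L * real q powr (real_of_int (2 * (1 + int j)) / 2 + - real_of_int (1 + int j))"
        by (simp add: powr_add)
      also have "real_of_int (2 * (1 + int j)) / 2 + - real_of_int (1 + int j) = 0" by (simp add: field_simps)
      finally show ?thesis using q2 by simp
    qed
    moreover have "1 + int j < n \<longleftrightarrow> j < nat (n - 1)" by linarith
    ultimately show "(if 1 + int j < n then Ef (2 * (1 + int j)) else 0) * ennreal (L * real q powr (- real_of_int (1 + int j)))
       = (if j < nat (n - 1) then ennreal L else 0)" by simp
  qed
  also have "\<dots> = (\<Sum>j\<in>{..<nat (n - 1)}. (if j < nat (n - 1) then ennreal L else 0))"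
    by (rule suminf_finite) auto
  also have "\<dots> = (\<Sum>j\<in>{..<nat (n - 1)}. ennreal L)" by simp
  also have "\<dots> = ennreal (L * real (nat (n - 1)))"
    using L_pos by (simp add: ennreal_mult' ennreal_of_nat_eq_real_of_nat mult.commute)
  finally show ?thesis .
qed

end

context lf
begin

lemma diff_ball: assumes "A \<in> sets M" "vball v d k \<subseteq> A" "emeasure M A = ennreal \<alpha>"
  shows "emeasure M (A - vball v d k) = ennreal (\<alpha> - mu0 * real q powr (- real_of_int k))"
proof -
  have "emeasure M (A - vball v d k) = emeasure M A - emeasure M (vball v d k)"
    by (rule emeasure_Diff) (use assms in \<open>auto simp: mball_val\<close>)
  also have "\<dots> = ennreal (\<alpha> - mu0 * real q powr (- real_of_int k))"
    unfolding assms(3) mball_val using mu0_pos by (simp add: ennreal_minus)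
  finally show ?thesis .
qed

lemma mu0_alt: "mu0 = L / (1 - rr * rr)"
  unfolding mu0_def rr_sq using q2 by (simp add: field_simps)

lemma R_meas_pos:
  assumes x: "x \<noteq> 0" "v x = n" "n \<ge> 1" "1 - x \<noteq> 0" "v (1 - x) = 0"
  shows "emeasure M (vball v 0 n - vball v 0 (n + 1) - vball v x (n + 1) - vball v 1 1)
           = ennreal (mu0 * real q powr (- real_of_int n) * (1 - 2 / real q))"
    and "emeasure M (vball v 0 0 - vball v 0 1 - vball v 1 1 - vball v 0 n)
           = ennreal (mu0 * (1 - 2 / real q))"
proof -
  have q0: "real q > 0" using q2 by simp
  have pw: "real q powr (- real_of_int (n + 1)) = real q powr (- real_of_int n) / real q"
    using q0 by (simp add: powr_diff)
  have d11: "vball v 1 1 \<inter> vball v 0 1 = {}" using ball11_sub by blast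
  have sub: "vball v 0 n \<subseteq> vball v 0 1" using x(3) by (rule vball_mono)
  have "vball v 0 n - vball v 0 (n + 1) - vball v x (n + 1) - vball v 1 1 = vball v 0 n - vball v 0 (n + 1) - vball v x (n + 1)"
    using d11 sub by blast
  moreover
  have xin: "x \<in> vball v 0 n" using x by (simp add: mem_vball)
  have xout: "x \<notin> vball v 0 (n + 1)" using x by (simp add: mem_vball)
  have s2: "vball v x (n + 1) \<subseteq> vball v 0 n - vball v 0 (n + 1)"
    using vball_mono[of n "n+1" x] vball_trans[OF xin] vball_disj[OF xout] by auto
  have e1: "emeasure M (vball v 0 n - vball v 0 (n + 1)) = ennreal (mu0 * real q powr (- real_of_int n) - mu0 * real q powr (- real_of_int (n + 1)))"
    by (rule diff_ball) (auto simp: mball_val vball_mono)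
  have "emeasure M (vball v 0 n - vball v 0 (n + 1) - vball v x (n + 1))
      = ennreal (mu0 * real q powr (- real_of_int n) - mu0 * real q powr (- real_of_int (n + 1)) - mu0 * real q powr (- real_of_int (n + 1)))"
    by (rule diff_ball[OF _ s2 e1]) (simp add: sets.Diff)
  moreover have "mu0 * real q powr (- real_of_int n) - mu0 * real q powr (- real_of_int (n + 1)) - mu0 * real q powr (- real_of_int (n + 1))
     = mu0 * real q powr (- real_of_int n) * (1 - 2 / real q)"
    unfolding pw by (simp add: field_simps)
  ultimately show "emeasure M (vball v 0 n - vball v 0 (n + 1) - vball v x (n + 1) - vball v 1 1)
           = ennreal (mu0 * real q powr (- real_of_int n) * (1 - 2 / real q))" by simp
  have "vball v 0 0 - vball v 0 1 - vball v 1 1 - vball v 0 n = vball v 0 0 - vball v 0 1 - vball v 1 1"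
    using sub by blast
  moreover have e2: "emeasure M (vball v 0 0 - vball v 0 1) = ennreal (mu0 * real q powr (- real_of_int 0) - mu0 * real q powr (- real_of_int 1))"
    by (rule diff_ball) (auto simp: mball_val vball_mono)
  have "emeasure M (vball v 0 0 - vball v 0 1 - vball v 1 1) = ennreal (mu0 * real q powr (- real_of_int 0) - mu0 * real q powr (- real_of_int 1) - mu0 * real q powr (- real_of_int 1))"
    by (rule diff_ball[OF _ ball11_sub e2]) (simp add: sets.Diff)
  moreover have "mu0 * real q powr (- real_of_int 0) - mu0 * real q powr (- real_of_int 1) - mu0 * real q powr (- real_of_int 1) = mu0 * (1 - 2 / real q)"
    using q0 by (simp add: powr_minus_divide field_simps)
  ultimately show "emeasure M (vball v 0 0 - vball v 0 1 - vball v 1 1 - vball v 0 n) = ennreal (mu0 * (1 - 2 / real q))"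
    by simp
qed

lemma R_meas_zero:
  assumes x: "x \<noteq> 0" "v x = 0" "1 - x \<noteq> 0" "v (1 - x) = 0"
  shows "emeasure M (vball v 0 0 - vball v 0 (0 + 1) - vball v x (0 + 1) - vball v 1 1)
           = ennreal (mu0 * (1 - 3 / real q))"
    and "emeasure M (vball v 0 0 - vball v 0 1 - vball v 1 1 - vball v 0 0) = 0"
proof -
  have q0: "real q > 0" using q2 by simp
  have xin: "x \<in> vball v 0 0" using x by (simp add: mem_vball)
  have xout: "x \<notin> vball v 0 1" using x by (simp add: mem_vball)
  have s2: "vball v x 1 \<subseteq> vball v 0 0 - vball v 0 1"
    using vball_mono[of 0 1 x] vball_trans[OF xin] vball_disj[OF xout] by auto
  have one_out: "1 \<notin> vball v x 1" using x by (simp add: mem_vball vdiff_sym[of 1 x])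
  have s3: "vball v 1 1 \<subseteq> vball v 0 0 - vball v 0 1 - vball v x 1"
    using ball11_sub vball_disj[OF one_out] by auto
  have e1: "emeasure M (vball v 0 0 - vball v 0 1) = ennreal (mu0 * real q powr (- real_of_int 0) - mu0 * real q powr (- real_of_int 1))"
    by (rule diff_ball) (auto simp: mball_val vball_mono)
  have e2: "emeasure M (vball v 0 0 - vball v 0 1 - vball v x 1) = ennreal (mu0 * real q powr (- real_of_int 0) - mu0 * real q powr (- real_of_int 1) - mu0 * real q powr (- real_of_int 1))"
    by (rule diff_ball[OF _ s2 e1]) (simp add: sets.Diff)
  have "emeasure M (vball v 0 0 - vball v 0 1 - vball v x 1 - vball v 1 1) = ennreal (mu0 * real q powr (- real_of_int 0) - mu0 * real q powr (- real_of_int 1) - mu0 * real q powr (- real_of_int 1) - mu0 * real q powr (- real_of_int 1))"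
    by (rule diff_ball[OF _ s3 e2]) (simp add: sets.Diff)
  moreover have "mu0 * real q powr (- real_of_int 0) - mu0 * real q powr (- real_of_int 1) - mu0 * real q powr (- real_of_int 1) - mu0 * real q powr (- real_of_int 1) = mu0 * (1 - 3 / real q)"
    using q0 by (simp add: powr_minus_divide field_simps)
  ultimately show "emeasure M (vball v 0 0 - vball v 0 (0 + 1) - vball v x (0 + 1) - vball v 1 1) = ennreal (mu0 * (1 - 3 / real q))"
    by simp
  have "vball v 0 0 - vball v 0 1 - vball v 1 1 - vball v 0 0 = {}" by blast
  then show "emeasure M (vball v 0 0 - vball v 0 1 - vball v 1 1 - vball v 0 0) = 0" by (simp only: emeasure_empty)
qed

end

lemma alg1: fixes r L n :: real assumes "0 < r" "r < 1"
  shows "4 * (L * (r / (1 - r))) + L * (n - 1) + 2 * ((L / (1 - r * r)) * (1 - 2 * (r * r)))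
       = (1 + 4 * r + r * r) / (1 - r * r) * L + n * L"
proof -
  obtain D where D: "D = 1 - r * r" by blast
  have D0: "D \<noteq> 0" using assms D by (smt (verit) mult_less_cancel_right1)
  have e: "r / (1 - r) = (r + r * r) / D"
  proof -
    have "1 - r \<noteq> 0" using assms by simp
    moreover have "r * D = (r + r * r) * (1 - r)" unfolding D by (simp add: algebra_simps)
    ultimately show ?thesis using D0 by (simp add: frac_eq_eq)
  qed
  have "4 * (L * ((r + r * r) / D)) + L * (n - 1) + 2 * ((L / D) * (1 - 2 * (r * r)))
       = (1 + 4 * r + r * r) / D * L + n * L"
  proof -
    have "4 * (L * ((r + r * r) / D)) + L * (n - 1) + 2 * ((L / D) * (1 - 2 * (r * r)))
       = (4 * L * (r + r * r) + L * (n - 1) * D + 2 * L * (1 - 2 * (r * r))) / D"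
      using D0 by (simp add: field_simps)
    also have "4 * L * (r + r * r) + L * (n - 1) * D + 2 * L * (1 - 2 * (r * r)) = (1 + 4 * r + r * r) * L + n * L * D"
      unfolding D by (simp add: algebra_simps)
    also have "\<dots> / D = (1 + 4 * r + r * r) / D * L + n * L"
      using D0 by (simp add: field_simps)
    finally show ?thesis .
  qed
  then show ?thesis unfolding e D[symmetric] .
qed

lemma alg0: fixes r L n :: real assumes "0 < r" "r < 1"
  shows "4 * (L * (r / (1 - r))) + (L / (1 - r * r)) * (1 - 3 * (r * r))
       = (1 + 4 * r + r * r) / (1 - r * r) * L"
proof -
  obtain D where D: "D = 1 - r * r" by blast
  have D0: "D \<noteq> 0" using assms D by (smt (verit) mult_less_cancel_right1)
  have e: "r / (1 - r) = (r + r * r) / D"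
  proof -
    have "1 - r \<noteq> 0" using assms by simp
    moreover have "r * D = (r + r * r) * (1 - r)" unfolding D by (simp add: algebra_simps)
    ultimately show ?thesis using D0 by (simp add: frac_eq_eq)
  qed
  have "4 * (L * ((r + r * r) / D)) + (L / D) * (1 - 3 * (r * r))
       = (1 + 4 * r + r * r) / D * L"
  proof -
    have "4 * (L * ((r + r * r) / D)) + (L / D) * (1 - 3 * (r * r))
       = (4 * L * (r + r * r) + L * (1 - 3 * (r * r))) / D"
      using D0 by (simp add: field_simps)
    also have "4 * L * (r + r * r) + L * (1 - 3 * (r * r)) = (1 + 4 * r + r * r) * L"
      unfolding D by (simp add: algebra_simps)
    also have "\<dots> / D = (1 + 4 * r + r * r) / D * L"
      using D0 by (simp add: field_simps)
    finally show ?thesis .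
  qed
  then show ?thesis unfolding e D[symmetric] .
qed


context lf
begin

lemma q3: assumes "v x = 0" "x \<noteq> 0" "1 - x \<noteq> 0" "v (1 - x) = 0" shows "q \<ge> 3"
proof -
  have in0: "0 \<in> vball v 0 0" "1 \<in> vball v 0 0" "x \<in> vball v 0 0" using assms by (auto simp: mem_vball)
  have d1: "vball v 0 1 \<noteq> vball v 1 1"
  proof
    assume "vball v 0 1 = vball v 1 1"
    then have "1 \<in> vball v 0 1" using center_vball[of 1 1] by simp
    then show False by (simp add: mem_vball)
  qed
  have d2: "vball v 0 1 \<noteq> vball v x 1"
  proof
    assume "vball v 0 1 = vball v x 1"
    then have "x \<in> vball v 0 1" using center_vball[of x 1] by simp
    then show False using assms by (simp add: mem_vball)
  qed
  have d3: "vball v 1 1 \<noteq> vball v x 1"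
  proof
    assume "vball v 1 1 = vball v x 1"
    then have "x \<in> vball v 1 1" using center_vball[of x 1] by simp
    then show False using assms by (simp add: mem_vball vdiff_sym[of x 1])
  qed
  have "{vball v 0 1, vball v 1 1, vball v x 1} \<subseteq> residue_classes v" unfolding res_eq using in0 by auto
  then have "card {vball v 0 1, vball v 1 1, vball v x 1} \<le> q" using card_mono[OF fin_res] card_res by metis
  moreover have "card {vball v 0 1, vball v 1 1, vball v x 1} = 3" using d1 d2 d3 by simp
  ultimately show ?thesis by simp
qed

lemma E_val:
  assumes x: "x \<noteq> 0" "v x = n" "n \<ge> 0" "1 - x \<noteq> 0" "v (1 - x) = 0"
  shows "integral\<^sup>N M (fx x) = ennreal ((1 + 4 * rr + rr * rr) / (1 - rr * rr) * L + real_of_int n * L)"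
proof -
  define g1 where "g1 = (\<lambda>s. if s \<notin> vball v 0 0 then Ef (3 * v (s - 0)) else 0)"
  define g2 where "g2 = (\<lambda>s. if s \<in> vball v 1 1 \<and> s \<noteq> 1 then Ef (v (s - 1)) else 0)"
  define g3 where "g3 = (\<lambda>s. if s \<in> vball v 0 1 \<and> s \<noteq> 0 then (if v (s - 0) < n then Ef (2 * v (s - 0)) else 0) else 0)"
  define g4 where "g4 = (\<lambda>s. if s \<in> vball v 0 (n + 1) \<and> s \<noteq> 0 then Ef (n + v (s - 0)) else 0)"
  define g5 where "g5 = (\<lambda>s. if s \<in> vball v x (n + 1) \<and> s \<noteq> x then Ef (n + v (s - x)) else 0)"
  define R6 where "R6 = vball v 0 n - vball v 0 (n + 1) - vball v x (n + 1) - vball v 1 1"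
  define R7 where "R7 = vball v 0 0 - vball v 0 1 - vball v 1 1 - vball v 0 n"
  define g6 where "g6 = (\<lambda>s. Ef (2 * n) * indicator R6 s)"
  define g7 where "g7 = (\<lambda>s. Ef 0 * indicator R7 s)"
  have fxeq: "fx x = (\<lambda>s. g1 s + g2 s + g3 s + g4 s + g5 s + g6 s + g7 s)"
  proof
    fix s show "fx x s = g1 s + g2 s + g3 s + g4 s + g5 s + g6 s + g7 s"
      unfolding g1_def g2_def g3_def g4_def g5_def g6_def g7_def R6_def R7_def by (rule fx_decomp[OF x])
  qed
  have R6s[measurable]: "R6 \<in> sets M" unfolding R6_def by measurable
  have R7s[measurable]: "R7 \<in> sets M" unfolding R7_def by measurable
  have m1[measurable]: "g1 \<in> borel_measurable M" unfolding g1_def by (rule shell_out_meas[of 0 0 "\<lambda>k. Ef (3 * k)"])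
  have m2[measurable]: "g2 \<in> borel_measurable M" unfolding g2_def by (rule shell_meas[of 1 1 "\<lambda>k. Ef k"])
  have m3[measurable]: "g3 \<in> borel_measurable M" unfolding g3_def by (rule shell_meas[of 0 1 "\<lambda>k. if k < n then Ef (2 * k) else 0"])
  have m4[measurable]: "g4 \<in> borel_measurable M" unfolding g4_def by (rule shell_meas[of 0 "n + 1" "\<lambda>k. Ef (n + k)"])
  have m5[measurable]: "g5 \<in> borel_measurable M" unfolding g5_def by (rule shell_meas[of x "n + 1" "\<lambda>k. Ef (n + k)"])
  have m6[measurable]: "g6 \<in> borel_measurable M" unfolding g6_def by measurable
  have m7[measurable]: "g7 \<in> borel_measurable M" unfolding g7_def by measurable
  have "integral\<^sup>N M (fx x) = integral\<^sup>N M g1 + integral\<^sup>N M g2 + integral\<^sup>N M g3 + integral\<^sup>N M g4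
      + integral\<^sup>N M g5 + integral\<^sup>N M g6 + integral\<^sup>N M g7"
  proof -
    have "integral\<^sup>N M (\<lambda>s. g1 s + g2 s + g3 s + g4 s + g5 s + g6 s + g7 s) = integral\<^sup>N M (\<lambda>s. g1 s + g2 s + g3 s + g4 s + g5 s + g6 s) + integral\<^sup>N M g7"
      by (rule nn_integral_add) measurable
    also have "integral\<^sup>N M (\<lambda>s. g1 s + g2 s + g3 s + g4 s + g5 s + g6 s) = integral\<^sup>N M (\<lambda>s. g1 s + g2 s + g3 s + g4 s + g5 s) + integral\<^sup>N M g6"
      by (rule nn_integral_add) measurable
    also have "integral\<^sup>N M (\<lambda>s. g1 s + g2 s + g3 s + g4 s + g5 s) = integral\<^sup>N M (\<lambda>s. g1 s + g2 s + g3 s + g4 s) + integral\<^sup>N M g5"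
      by (rule nn_integral_add) measurable
    also have "integral\<^sup>N M (\<lambda>s. g1 s + g2 s + g3 s + g4 s) = integral\<^sup>N M (\<lambda>s. g1 s + g2 s + g3 s) + integral\<^sup>N M g4"
      by (rule nn_integral_add) measurable
    also have "integral\<^sup>N M (\<lambda>s. g1 s + g2 s + g3 s) = integral\<^sup>N M (\<lambda>s. g1 s + g2 s) + integral\<^sup>N M g3"
      by (rule nn_integral_add) measurable
    also have "integral\<^sup>N M (\<lambda>s. g1 s + g2 s) = integral\<^sup>N M g1 + integral\<^sup>N M g2"
      by (rule nn_integral_add) measurable
    finally show ?thesis unfolding fxeq .
  qed
  also have "integral\<^sup>N M g1 = ennreal (L * (rr / (1 - rr)))" unfolding g1_def by (rule I1)
  also have "integral\<^sup>N M g2 = ennreal (L * (rr / (1 - rr)))" unfolding g2_def by (rule I2)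
  also have "integral\<^sup>N M g3 = ennreal (L * real (nat (n - 1)))" unfolding g3_def by (rule I3)
  also have "integral\<^sup>N M g4 = ennreal (L * (rr / (1 - rr)))" unfolding g4_def by (rule I45[OF x(3)])
  also have "integral\<^sup>N M g5 = ennreal (L * (rr / (1 - rr)))" unfolding g5_def by (rule I45[OF x(3)])
  also have "integral\<^sup>N M g6 = Ef (2 * n) * emeasure M R6" unfolding g6_def by (rule nn_integral_cmult_indicator[OF R6s])
  also have "integral\<^sup>N M g7 = Ef 0 * emeasure M R7" unfolding g7_def by (rule nn_integral_cmult_indicator[OF R7s])
  finally have tot: "integral\<^sup>N M (fx x) = ennreal (L * (rr / (1 - rr))) + ennreal (L * (rr / (1 - rr))) + ennreal (L * real (nat (n - 1)))
     + ennreal (L * (rr / (1 - rr))) + ennreal (L * (rr / (1 - rr))) + Ef (2 * n) * emeasure M R6 + Ef 0 * emeasure M R7" .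
  have G0: "L * (rr / (1 - rr)) \<ge> 0" using L_pos rr_pos rr_lt1 by simp
  have Ef0: "Ef 0 = 1" unfolding Ef_def using q2 by simp
  have q0: "real q > 0" using q2 by simp
  have qm: "1 / real q = rr * rr" using rr_sq by simp
  have mu0': "mu0 = L / (1 - rr * rr)" by (rule mu0_alt)
  show ?thesis
  proof (cases "n = 0")
    case True
    have x0: "v x = 0" using x True by simp
    have "emeasure M R6 = ennreal (mu0 * (1 - 3 / real q))"
      using R_meas_zero(1)[OF x(1) x0 x(4,5)] unfolding R6_def True by simp
    moreover have "emeasure M R7 = 0"
      using R_meas_zero(2)[OF x(1) x0 x(4,5)] unfolding R7_def True by simp
    moreover have "Ef (2 * n) = 1" using Ef0 True by simp
    moreover have "mu0 * (1 - 3 / real q) \<ge> 0" using mu0_pos q3[OF x0 x(1,4,5)] by simp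
    ultimately have "integral\<^sup>N M (fx x) = ennreal (4 * (L * (rr / (1 - rr))) + mu0 * (1 - 3 / real q))"
      unfolding tot using G0 True by (simp add: ennreal_plus[symmetric] del: ennreal_plus)
    also have "4 * (L * (rr / (1 - rr))) + mu0 * (1 - 3 / real q) = (1 + 4 * rr + rr * rr) / (1 - rr * rr) * L"
      unfolding mu0' divide_inverse using alg0[OF rr_pos rr_lt1, of L] qm by (simp add: divide_inverse algebra_simps)
    finally show ?thesis using True by simp
  next
    case False
    then have n1: "n \<ge> 1" using x(3) by simp
    have "emeasure M R6 = ennreal (mu0 * real q powr (- real_of_int n) * (1 - 2 / real q))"
      using R_meas_pos(1)[OF x(1,2) n1 x(4,5)] unfolding R6_def by simp
    moreover have "emeasure M R7 = ennreal (mu0 * (1 - 2 / real q))"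
      using R_meas_pos(2)[OF x(1,2) n1 x(4,5)] unfolding R7_def by simp
    moreover have "Ef (2 * n) = ennreal (real q powr real_of_int n)" unfolding Ef_def by simp
    moreover have "real q powr real_of_int n * (mu0 * real q powr (- real_of_int n) * (1 - 2 / real q)) = mu0 * (1 - 2 / real q)"
    proof -
      have "real q powr real_of_int n * real q powr (- real_of_int n) = 1"
        using q0 by (simp add: powr_add[symmetric])
      then show ?thesis by (simp add: algebra_simps)
    qed
    moreover have "mu0 * (1 - 2 / real q) \<ge> 0" using mu0_pos q2 by simp
    moreover have "mu0 * real q powr (- real_of_int n) * (1 - 2 / real q) \<ge> 0" using mu0_pos q2 by simp
    ultimately have "integral\<^sup>N M (fx x) = ennreal (4 * (L * (rr / (1 - rr))) + L * (real_of_int n - 1) + 2 * (mu0 * (1 - 2 / real q)))"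
      unfolding tot using G0 L_pos n1 Ef0
      by (simp add: ennreal_plus[symmetric] ennreal_mult[symmetric] of_nat_nat del: ennreal_plus)
    also have "4 * (L * (rr / (1 - rr))) + L * (real_of_int n - 1) + 2 * (mu0 * (1 - 2 / real q))
        = (1 + 4 * rr + rr * rr) / (1 - rr * rr) * L + real_of_int n * L"
      unfolding mu0' using alg1[OF rr_pos rr_lt1, of L "real_of_int n"] qm by (simp add: divide_inverse algebra_simps)
    finally show ?thesis .
  qed
qed

end

context lf
begin

lemma Efun_eq: "Efun v q M x = integral\<^sup>N M (fx x)"
  unfolding Efun_def fx_def[abs_def] ..

lemma part1:
  assumes "0 < absv v q x" "absv v q x \<le> 1" "absv v q (1 - x) = 1"
  shows "Efun v q M x = ennreal ((1 + 4 * real q powr (-1/2) + 1 / real q) / (1 - 1 / real q) * ln (real q)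
                       - ln (absv v q x))"
proof -
  have q1: "real q > 1" using q2 by simp
  have x0: "x \<noteq> 0" using assms(1) by (auto simp: absv_def)
  have x1: "1 - x \<noteq> 0" using assms(3) by (auto simp: absv_def)
  have "real q powr (- real_of_int (v x)) \<le> real q powr 0" using assms(2) x0 by (simp add: absv_nz)
  then have vx: "v x \<ge> 0" using q1 by (subst (asm) powr_le_cancel_iff) auto
  have "real q powr (- real_of_int (v (1 - x))) = real q powr 0" using assms(3) x1 q1 by (simp add: absv_nz)
  then have v1x: "v (1 - x) = 0" using q1 by (subst (asm) powr_inj) auto
  have "Efun v q M x = ennreal ((1 + 4 * rr + rr * rr) / (1 - rr * rr) * L + real_of_int (v x) * L)"
    unfolding Efun_eq by (rule E_val[OF x0 refl vx x1 v1x])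
  also have "(1 + 4 * rr + rr * rr) / (1 - rr * rr) * L + real_of_int (v x) * L
     = (1 + 4 * real q powr (-1/2) + 1 / real q) / (1 - 1 / real q) * ln (real q) - ln (absv v q x)"
  proof -
    have "ln (absv v q x) = - real_of_int (v x) * ln (real q)"
      using x0 q1 by (simp add: absv_nz ln_powr)
    then show ?thesis unfolding rr_sq L_def by (simp add: rr_def)
  qed
  finally show ?thesis .
qed

lemma E_sym: "Efun v q M x = Efun v q M (1 - x)"
proof -
  have "(\<integral>\<^sup>+s. fx (1 - x) (1 + (-1) * s) \<partial>M) = ennreal (real q powr real_of_int (v (-1))) * integral\<^sup>N M (fx (1 - x))"
    by (rule cov) simp_all
  also have "ennreal (real q powr real_of_int (v (-1))) = 1" using q2 by simp
  also have "(\<lambda>s. fx (1 - x) (1 + (-1) * s)) = fx x"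
  proof
    fix s
    have E: "(1 + (-1) * s) * ((1 + (-1) * s) - 1) * ((1 + (-1) * s) - (1 - x)) = - (s * (s - 1) * (s - x))"
      by (simp add: algebra_simps)
    show "fx (1 - x) (1 + (-1) * s) = fx x s" unfolding fx_def E absv_neg ..
  qed
  finally show ?thesis unfolding Efun_eq by simp
qed

lemma E_inv: assumes x0: "x \<noteq> 0"
  shows "Efun v q M (inverse x) = ennreal (absv v q x powr (1/2)) * Efun v q M x"
proof -
  define a where "a = absv v q x"
  have a0: "a > 0" unfolding a_def using absv_pos[OF x0] .
  have ainv: "absv v q (inverse x) = inverse a"
    unfolding a_def using x0 q2 by (simp add: absv_nz vinv powr_minus)
  have cv: "(\<integral>\<^sup>+s. fx (inverse x) (0 + inverse x * s) \<partial>M) = ennreal (real q powr real_of_int (v (inverse x))) * integral\<^sup>N M (fx (inverse x))"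
    by (rule cov) (simp_all add: x0)
  have qa: "real q powr real_of_int (v (inverse x)) = a"
    unfolding a_def using x0 by (simp add: vinv absv_nz)
  have pt: "fx (inverse x) (0 + inverse x * s) = ennreal (a powr (3/2)) * fx x s" for s
  proof -
    define y where "y = s * (s - 1) * (s - x)"
    have "(0 + inverse x * s) * ((0 + inverse x * s) - 1) * ((0 + inverse x * s) - inverse x) = y * inverse x ^ 3"
      unfolding y_def using x0 by (simp add: field_simps power3_eq_cube)
    moreover have "absv v q (y * inverse x ^ 3) = absv v q y * inverse (a ^ 3)"
      by (simp add: absv_mult ainv power3_eq_cube)
    moreover have "1 / sqrt (absv v q y * inverse (a ^ 3)) = a powr (3/2) * (1 / sqrt (absv v q y))"
    proof -
      have "sqrt (a ^ 3) = a powr (3/2)"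
        using powr_half_sqrt_powr[of a 3] a0 by (simp add: powr_numeral)
      then have "sqrt (absv v q y * inverse (a ^ 3)) = sqrt (absv v q y) * inverse (a powr (3/2))"
        by (simp only: real_sqrt_mult real_sqrt_inverse)
      then show ?thesis by (simp only: divide_inverse inverse_mult_distrib inverse_inverse_eq mult_1 mult.commute)
    qed
    moreover have "ennreal (a powr (3/2)) * ennreal (1 / sqrt (absv v q y)) = ennreal (a powr (3/2) / sqrt (absv v q y))"
      by (subst ennreal_mult'[symmetric]) simp_all
    ultimately show ?thesis unfolding fx_def y_def[symmetric] using a0
      by simp
  qed
  have "ennreal a * Efun v q M (inverse x) = ennreal (a powr (3/2)) * Efun v q M x"
    unfolding Efun_eq using cv qa pt nn_integral_cmult[OF fx_meas, of "ennreal (a powr (3/2))" x] by simp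
  then have "ennreal (1 / a) * (ennreal a * Efun v q M (inverse x)) = ennreal (1 / a) * (ennreal (a powr (3/2)) * Efun v q M x)"
    by simp
  moreover have "ennreal (1 / a) * ennreal a = 1" using a0 by (simp add: ennreal_mult[symmetric])
  moreover have "ennreal (1 / a) * ennreal (a powr (3/2)) = ennreal (a powr (1/2))"
  proof -
    have "a powr (3/2) = a powr (1 + 1/2)" by simp
    also have "\<dots> = a powr 1 * a powr (1/2)" by (rule powr_add)
    finally have "a powr (3/2) = a * a powr (1/2)" using a0 by simp
    then have "1 / a * a powr (3/2) = a powr (1/2)" using a0 by simp
    then show ?thesis using a0 by (simp add: ennreal_mult[symmetric])
  qed
  ultimately show ?thesis unfolding a_def by (simp add: mult.assoc[symmetric])
qed

end

theorem proposition8p5: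
  fixes v :: "'a::field \<Rightarrow> int" and q :: nat and M :: "'a measure"
  assumes "nonarch_local_field v q"
    and "normalized_haar v q M"
  shows "(\<forall>x. 0 < absv v q x \<and> absv v q x \<le> 1 \<and> absv v q (1 - x) = 1 \<longrightarrow>
            Efun v q M x =
              ennreal ((1 + 4 * real q powr (-1/2) + 1 / real q) / (1 - 1 / real q) * ln (real q)
                       - ln (absv v q x)))
       \<and> (\<forall>x. x \<noteq> 0 \<and> x \<noteq> 1 \<longrightarrow>
            Efun v q M x = Efun v q M (1 - x) \<and>
            Efun v q M (inverse x) = ennreal (absv v q x powr (1/2)) * Efun v q M x)"
proof -
  have h: "discrete_valuation v" "card (residue_classes v) = q" "q \<ge> 2"
    using assms(1) unfolding nonarch_local_field_def by auto
  interpret lf v q M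
    by unfold_locales (use h assms(2) in auto)
  show ?thesis
  proof (intro conjI allI impI)
    fix x assume "0 < absv v q x \<and> absv v q x \<le> 1 \<and> absv v q (1 - x) = 1"
    then show "Efun v q M x =
              ennreal ((1 + 4 * real q powr (-1/2) + 1 / real q) / (1 - 1 / real q) * ln (real q)
                       - ln (absv v q x))" using part1 by blast
  next
    fix x :: 'a show "Efun v q M x = Efun v q M (1 - x)" by (rule E_sym)
  next
    fix x :: 'a assume "x \<noteq> 0 \<and> x \<noteq> 1"
    then show "Efun v q M (inverse x) = ennreal (absv v q x powr (1/2)) * Efun v q M x"
      using E_inv by blast
  qed
qed

end
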